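(* Let $n\ge2$ and let $K\in\mathcal S_n$ with $\mathrm{Outrad}(K)<1$. Then \[ \mathrm{ext}_c(K)=\{\,y-u:\ y\in\partial K^c,\ u\in N_{K^c}(y),\ \mathbb R^+u\text{ is an extremal ray of the cone }\mathbb R^+N_{K^c}(y)\,\}. \]
   Context: $B(x,r)$ is the closed Euclidean ball. For $A\subseteq\mathbb R^n$, $A^c=\bigcap_{x\in A}B(x,1)$ (with $\emptyset^c=\mathbb R^n$) and $\mathrm{conv}_c(A)=A^{cc}$. $\mathcal S_n$ is the class of all sets of the form $\bigcap_{x\in A}B(x,1)$, $A\subseteq\mathbb R^n$. $\mathrm{Outrad}(K)$ is the minimal $R$ such that $K\subseteq B(z,R)$ for some $z$. A point $x\in K$ is $c$-extremal for $K$ if $x\in\mathrm{conv}_c(\{y,z\})$ with $y,z\in K$ implies $y=x$ or $z=x$; $\mathrm{ext}_c(K)$ is the set of $c$-extremal points. For a convex body $T$ and $z\in\partial T$, $N_T(z)$ is the set of unit outer normals at $z$, and $\mathbb R^+N_T(z)$ is the outer normal cone. *)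

theory Defs
  imports "HOL-Analysis.Analysis"
begin

text \<open>c-dual: intersection of closed unit balls centred at the points of A
  (the empty intersection is the whole space).\<close>
definition cdual :: "'a::euclidean_space set \<Rightarrow> 'a set" where
  "cdual A = (\<Inter>x\<in>A. cball x 1)"

definition conv_c :: "'a::euclidean_space set \<Rightarrow> 'a set" where
  "conv_c A = cdual (cdual A)"

definition S_class :: "'a::euclidean_space set set" where
  "S_class = {cdual A | A. True}"

text \<open>Circumradius: the minimal R with K contained in some ball of radius R
  (extended-real valued, so that unbounded sets get infinity).\<close>
definition Outrad :: "'a::euclidean_space set \<Rightarrow> ereal" where
  "Outrad K = Inf {ereal R | R. \<exists>z. K \<subseteq> cball z R}"

definition c_extremal :: "'a::euclidean_space set \<Rightarrow> 'a \<Rightarrow> bool" where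
  "c_extremal K x \<longleftrightarrow> x \<in> K \<and>
     (\<forall>y z. y \<in> K \<longrightarrow> z \<in> K \<longrightarrow> x \<in> conv_c {y, z} \<longrightarrow> y = x \<or> z = x)"

definition ext_c :: "'a::euclidean_space set \<Rightarrow> 'a set" where
  "ext_c K = {x. c_extremal K x}"

definition unit_normals :: "'a::euclidean_space set \<Rightarrow> 'a \<Rightarrow> 'a set" where
  "unit_normals T z = {u. norm u = 1 \<and> (\<forall>w\<in>T. inner u (w - z) \<le> 0)}"

definition pos_hull :: "'a::euclidean_space set \<Rightarrow> 'a set" where
  "pos_hull N = {c *\<^sub>R u | c u. c \<ge> 0 \<and> u \<in> N}"

definition ray :: "'a::euclidean_space \<Rightarrow> 'a set" where
  "ray u = {c *\<^sub>R u | c. c \<ge> 0}"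

definition extremal_ray :: "'a::euclidean_space \<Rightarrow> 'a set \<Rightarrow> bool" where
  "extremal_ray u C \<longleftrightarrow> u \<noteq> 0 \<and> ray u face_of C"

end

theory Submission imports Defs begin

lemma mem_cdual: "w \<in> cdual A \<longleftrightarrow> (\<forall>a\<in>A. dist a w \<le> 1)"
  by (auto simp: cdual_def)

lemma cdual_anti: "A \<subseteq> B \<Longrightarrow> cdual B \<subseteq> cdual A"
  by (auto simp: cdual_def)

lemma cdual_ext: "A \<subseteq> cdual (cdual A)"
  by (auto simp: mem_cdual) (metis dist_commute)

lemma cdual3: "cdual (cdual (cdual A)) = cdual A"
  by (meson cdual_anti cdual_ext subset_antisym)

lemma closed_cdual: "closed (cdual A)"
  unfolding cdual_def by (auto intro!: closed_INT)

lemma S_class_dd: "K \<in> S_class \<Longrightarrow> cdual (cdual K) = K"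
  by (auto simp: S_class_def cdual3)

lemma spindle_sub: "K \<in> S_class \<Longrightarrow> p\<in>K \<Longrightarrow> q\<in>K \<Longrightarrow> conv_c {p,q} \<subseteq> K"
  unfolding conv_c_def
  by (metis S_class_dd cdual_anti empty_subsetI insert_subset)

lemma dist_le1_iff: "dist a b \<le> 1 \<longleftrightarrow> inner (a - b) (a - b) \<le> (1::real)"
  by (simp add: dist_norm norm_eq_sqrt_inner)

lemma arc:
  fixes g h y :: "'a::euclidean_space"
  assumes g: "norm g = 1" and h: "norm h = 1" and ab: "\<alpha> \<ge> 0" "\<beta> \<ge> 0"
    and m: "norm (\<alpha> *\<^sub>R g + \<beta> *\<^sub>R h) = 1"
  shows "y - (\<alpha> *\<^sub>R g + \<beta> *\<^sub>R h) \<in> conv_c {y - g, y - h}"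
proof -
  have s: "\<alpha> + \<beta> \<ge> 1"
    using norm_triangle_ineq[of "\<alpha> *\<^sub>R g" "\<beta> *\<^sub>R h"] m g h ab by simp
  have gg: "inner g g = 1" "inner h h = 1" using g h by (simp_all add: dot_square_norm)
  show ?thesis
    unfolding conv_c_def mem_cdual
  proof (intro ballI)
    fix w assume w: "w \<in> cdual {y - g, y - h}"
    define v where "v = w - y"
    have "dist (y - g) w \<le> 1" "dist (y - h) w \<le> 1" using w by (auto simp: mem_cdual)
    hence "inner (v + g) (v + g) \<le> 1" "inner (v + h) (v + h) \<le> 1"
      unfolding dist_le1_iff v_def by (auto simp: algebra_simps inner_commute)
    hence 1: "inner v v + 2 * inner v g \<le> 0" and 2: "inner v v + 2 * inner v h \<le> 0"
      using gg by (auto simp: inner_add_left inner_add_right inner_commute)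
    have vv: "inner v v \<ge> 0" by simp
    have "inner v v + 2 * inner v (\<alpha> *\<^sub>R g + \<beta> *\<^sub>R h)
        = inner v v + \<alpha> * (2 * inner v g) + \<beta> * (2 * inner v h)"
      by (simp add: inner_add_right algebra_simps)
    also have "\<dots> \<le> inner v v - \<alpha> * inner v v - \<beta> * inner v v"
      using mult_left_mono[OF 1 ab(1)] mult_left_mono[OF 2 ab(2)]
      by (simp add: algebra_simps)
    also have "\<dots> = (1 - (\<alpha> + \<beta>)) * inner v v" by (simp add: algebra_simps)
    also have "\<dots> \<le> 0" using s vv by (simp add: mult_nonpos_nonneg)
    finally have *: "inner v v + 2 * inner v (\<alpha> *\<^sub>R g + \<beta> *\<^sub>R h) \<le> 0" .
    have mm: "inner (\<alpha> *\<^sub>R g + \<beta> *\<^sub>R h) (\<alpha> *\<^sub>R g + \<beta> *\<^sub>R h) = 1"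
      using m by (simp add: dot_square_norm)
    show "dist w (y - (\<alpha> *\<^sub>R g + \<beta> *\<^sub>R h)) \<le> 1"
    proof -
      have "w - (y - (\<alpha> *\<^sub>R g + \<beta> *\<^sub>R h)) = (v + (\<alpha> *\<^sub>R g + \<beta> *\<^sub>R h))" by (simp add: v_def algebra_simps)
      have e: "inner (v + (\<alpha> *\<^sub>R g + \<beta> *\<^sub>R h)) (v + (\<alpha> *\<^sub>R g + \<beta> *\<^sub>R h))
        = inner v v + 2 * inner v (\<alpha> *\<^sub>R g + \<beta> *\<^sub>R h) + inner (\<alpha> *\<^sub>R g + \<beta> *\<^sub>R h) (\<alpha> *\<^sub>R g + \<beta> *\<^sub>R h)"
        by (simp only: inner_add_left inner_add_right inner_commute) (simp add: inner_commute)
      show ?thesis unfolding dist_le1_iff \<open>w - _ = _\<close>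
        using * mm e by linarith
    qed
  qed
qed

lemma farkas:
  fixes S :: "'a::euclidean_space set"
  assumes "compact S" and d: "\<forall>s\<in>S. inner d s \<le> -1" and u0: "u \<noteq> 0"
    and u: "u \<notin> {c *\<^sub>R x | c x. c \<ge> 0 \<and> x \<in> convex hull S}"
  shows "\<exists>e \<epsilon>. \<epsilon> > 0 \<and> inner e u > 0 \<and> (\<forall>s\<in>S. inner e s \<le> -\<epsilon>)"
proof (cases "S = {}")
  case True
  then show ?thesis using u0 by (intro exI[of _ u] exI[of _ 1]) auto
next
  case False
  define C where "C = conic hull (convex hull S)"
  have Ceq: "C = {c *\<^sub>R x | c x. c \<ge> 0 \<and> x \<in> convex hull S}"
    unfolding C_def conic_hull_explicit ..
  have cc: "compact (convex hull S)" using assms(1) by (rule compact_convex_hull)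
  have "convex hull S \<subseteq> {x. inner d x \<le> -1}"
    by (rule hull_minimal) (use d convex_halfspace_le in auto)
  hence n0: "0 \<notin> convex hull S" by auto
  have "closed C" unfolding C_def using cc n0 closed_conic_hull_strong by blast
  moreover have "convex C" unfolding C_def by (simp add: convex_conic_hull)
  moreover have "u \<notin> C" using u Ceq by simp
  ultimately obtain a b where ab: "inner a u < b" "\<forall>x\<in>C. inner a x > b"
    using separating_hyperplane_closed_point by blast
  obtain s0 where "s0 \<in> S" using False by auto
  hence "0 \<in> C" unfolding Ceq using hull_inc[of s0 S] by (auto intro!: exI[of _ 0] exI[of _ s0])
  hence b0: "b < 0" using ab by auto
  have aS: "inner a s \<ge> 0" if "s \<in> S" for s
  proof (rule ccontr)
    assume neg: "\<not> inner a s \<ge> 0"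
    define t where "t = b / inner a s"
    have t0: "t \<ge> 0" using neg b0 by (simp add: t_def divide_nonpos_neg less_imp_le)
    have "t *\<^sub>R s \<in> C" unfolding Ceq using hull_inc[OF that] t0 by blast
    hence "inner a (t *\<^sub>R s) > b" using ab by auto
    moreover have "inner a (t *\<^sub>R s) = b" using neg by (simp add: t_def)
    ultimately show False by simp
  qed
  define \<epsilon> where "\<epsilon> = (- inner a u) / (2 * (\<bar>inner d u\<bar> + 1))"
  have au: "- inner a u > 0" using ab b0 by simp
  have ep: "\<epsilon> > 0" unfolding \<epsilon>_def using au by (intro divide_pos_pos) auto
  have "\<epsilon> * \<bar>inner d u\<bar> \<le> \<epsilon> * (\<bar>inner d u\<bar> + 1)" using ep by simp
  also have "\<dots> = (- inner a u) / 2" unfolding \<epsilon>_def by (simp add: field_simps)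
  finally have "\<epsilon> * \<bar>inner d u\<bar> \<le> (- inner a u) / 2" .
  moreover have "\<epsilon> * inner d u \<ge> - (\<epsilon> * \<bar>inner d u\<bar>)" using ep
    using mult_left_mono[OF abs_ge_minus_self[of "inner d u"] less_imp_le[OF ep]] by simp
  ultimately have "inner (- a + \<epsilon> *\<^sub>R d) u > 0" using au
    unfolding inner_add_left inner_minus_left inner_scaleR_left by linarith
  moreover have "\<forall>s\<in>S. inner (- a + \<epsilon> *\<^sub>R d) s \<le> -\<epsilon>"
  proof
    fix s assume s: "s \<in> S"
    have "\<epsilon> * inner d s \<le> \<epsilon> * (-1)" using d s ep by (intro mult_left_mono) auto
    then show "inner (- a + \<epsilon> *\<^sub>R d) s \<le> -\<epsilon>" using aS[OF s] unfolding inner_add_left inner_minus_left inner_scaleR_left by linarith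
  qed
  ultimately show ?thesis using ep by blast
qed

lemma dist_sq: "dist a b \<le> 1 \<longleftrightarrow> inner (b - a) (b - a) \<le> (1::real)"
  by (metis dist_commute dist_le1_iff)

lemma push:
  fixes K :: "'a::euclidean_space set"
  assumes K: "compact K" and y: "y \<in> cdual K" and ep: "\<epsilon> > 0"
    and act: "\<forall>k\<in>K. dist k y = 1 \<longrightarrow> inner e (y - k) \<le> -\<epsilon>"
  shows "\<exists>t>0. y + t *\<^sub>R e \<in> cdual K"
proof -
  define K' where "K' = K \<inter> {k. inner e (y - k) \<ge> -\<epsilon>/2}"
  have "closed {k. inner e (y - k) \<ge> -\<epsilon>/2}"
    by (intro closed_Collect_le continuous_intros)
  hence cK': "compact K'" unfolding K'_def using K by (rule compact_Int_closed[rotated])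
  have yK: "\<forall>k\<in>K. dist k y \<le> 1" using y by (simp add: mem_cdual)
  have lt1: "dist k y < 1" if "k \<in> K'" for k
  proof -
    have "dist k y \<le> 1" "k \<in> K" using yK that by (auto simp: K'_def)
    moreover have "dist k y \<noteq> 1"
    proof
      assume "dist k y = 1"
      hence "inner e (y - k) \<le> -\<epsilon>" using act \<open>k \<in> K\<close> by auto
      moreover have "inner e (y - k) \<ge> -\<epsilon>/2" using that by (auto simp: K'_def)
      ultimately show False using ep by simp
    qed
    ultimately show ?thesis by simp
  qed
  obtain m where m: "m < 1" "m \<ge> 0" "\<forall>k\<in>K'. dist k y \<le> m"
  proof (cases "K' = {}")
    case True then show ?thesis using that[of 0] by auto
  next
    case False
    have "continuous_on K' (\<lambda>k. dist k y)" by (intro continuous_intros)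
    then obtain k1 where "k1 \<in> K'" "\<forall>k\<in>K'. dist k y \<le> dist k1 y"
      using continuous_attains_sup[OF cK' False] by blast
    then show ?thesis using that[of "dist k1 y"] lt1 by auto
  qed
  define t where "t = min ((1 - m) / (norm e + 1)) (\<epsilon> / (inner e e + 1))"
  have ee: "inner e e \<ge> 0" by simp
  have p1: "norm e + 1 > 0" "inner e e + 1 > 0" using ee by (auto simp: add_nonneg_pos)
  have t0: "t > 0" unfolding t_def using m ep p1 by (auto intro!: divide_pos_pos)
  have "t \<le> (1 - m) / (norm e + 1)" unfolding t_def by simp
  hence t1: "t * (norm e + 1) \<le> 1 - m" using p1 by (simp add: pos_le_divide_eq)
  have "t \<le> \<epsilon> / (inner e e + 1)" unfolding t_def by simp
  hence t2: "t * (inner e e + 1) \<le> \<epsilon>" using p1 by (simp add: pos_le_divide_eq)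
  have "\<forall>k\<in>K. dist k (y + t *\<^sub>R e) \<le> 1"
  proof
    fix k assume k: "k \<in> K"
    show "dist k (y + t *\<^sub>R e) \<le> 1"
    proof (cases "k \<in> K'")
      case True
      have "dist k (y + t *\<^sub>R e) \<le> dist k y + dist y (y + t *\<^sub>R e)" by (rule dist_triangle)
      also have "dist y (y + t *\<^sub>R e) = t * norm e" using t0 by (simp add: dist_norm)
      finally have "dist k (y + t *\<^sub>R e) \<le> dist k y + t * norm e" .
      moreover have "dist k y \<le> m" using m(3) True by auto
      moreover have "t * norm e \<le> t * (norm e + 1)" using t0 by simp
      ultimately show ?thesis using t1 by linarith
    next
      case False
      hence neg: "inner e (y - k) < -\<epsilon>/2" using k by (auto simp: K'_def)
      have "inner (y - k) (y - k) \<le> 1" using yK k by (simp add: dist_sq)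
      have "inner (y + t *\<^sub>R e - k) (y + t *\<^sub>R e - k)
          = inner (y - k) (y - k) + 2 * t * inner e (y - k) + t * t * inner e e"
        by (simp add: algebra_simps inner_add_left inner_add_right inner_diff_left inner_diff_right inner_commute)
      also have "\<dots> \<le> 1 + 2 * t * (-\<epsilon>/2) + t * (t * inner e e)"
      proof -
        have "2 * t * inner e (y - k) \<le> 2 * t * (-\<epsilon>/2)" using neg t0 by (intro mult_left_mono) auto
        then show ?thesis using \<open>inner (y - k) (y - k) \<le> 1\<close> by (simp add: mult.assoc)
      qed
      also have "\<dots> \<le> 1"
      proof -
        have "t * inner e e \<le> \<epsilon>" using t2 t0 by (simp add: algebra_simps)
        hence "t * (t * inner e e) \<le> t * \<epsilon>" using t0 by (intro mult_left_mono) auto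
        thus ?thesis by simp
      qed
      finally show ?thesis by (simp add: dist_sq)
    qed
  qed
  then show ?thesis using t0 by (auto simp: mem_cdual)
qed

definition Gset :: "'a::euclidean_space set \<Rightarrow> 'a \<Rightarrow> 'a set" where
  "Gset K y = {g. norm g = 1 \<and> y - g \<in> K}"

lemma Gset_compact:
  fixes K :: "'a::euclidean_space set"
  assumes "compact K" shows "compact (Gset K y)"
proof -
  have "Gset K y = (\<lambda>k. y - k) ` K \<inter> sphere 0 1"
  proof safe
    fix g assume "g \<in> Gset K y"
    then show "g \<in> (\<lambda>k. y - k) ` K" "g \<in> sphere 0 1"
      by (auto simp: Gset_def intro!: image_eqI[of _ _ "y - g"])
  next
    fix k assume "k \<in> K" "y - k \<in> sphere 0 1"
    then show "y - k \<in> Gset K y" by (simp add: Gset_def)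
  qed
  moreover have "compact ((\<lambda>k. y - k) ` K)"
    by (intro compact_continuous_image continuous_intros assms)
  ultimately show ?thesis by (simp add: compact_Int_closed)
qed

lemma Gset_normal:
  fixes K :: "'a::euclidean_space set"
  assumes "g \<in> Gset K y" shows "g \<in> unit_normals (cdual K) y"
  unfolding unit_normals_def
proof (intro CollectI conjI ballI)
  show "norm g = 1" using assms by (simp add: Gset_def)
  hence gg: "inner g g = 1" by (simp add: dot_square_norm)
  fix w assume "w \<in> cdual K"
  hence "dist (y - g) w \<le> 1" using assms by (auto simp: mem_cdual Gset_def)
  hence "inner ((w - y) + g) ((w - y) + g) \<le> 1" by (simp add: dist_sq algebra_simps)
  hence "inner (w - y) (w - y) + 2 * inner g (w - y) \<le> 0" using gg
    by (simp add: inner_add_left inner_add_right inner_commute)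
  moreover have "inner (w - y) (w - y) \<ge> 0" by simp
  ultimately show "inner g (w - y) \<le> 0" by linarith
qed

lemma Gset_neg:
  fixes K :: "'a::euclidean_space set"
  assumes K: "K \<subseteq> cball z R" and R: "R < 1" and g: "g \<in> Gset K y"
  shows "inner ((2 / (1 - R\<^sup>2)) *\<^sub>R (z - y)) g \<le> -1"
proof -
  have "y - g \<in> K" "norm g = 1" using g by (auto simp: Gset_def)
  hence dz: "dist z (y - g) \<le> R" using K by auto
  hence R0: "R \<ge> 0" using zero_le_dist order_trans by blast
  have "R * R \<le> 1 * R" using R R0 by (intro mult_right_mono) auto
  hence R2: "R\<^sup>2 < 1" using R by (simp add: power2_eq_square)
  have "norm (z - (y - g)) ^ 2 \<le> R ^ 2" using dz R0 by (simp add: dist_norm power_mono)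
  hence "inner ((z - y) + g) ((z - y) + g) \<le> R\<^sup>2"
    by (simp add: power2_norm_eq_inner algebra_simps)
  moreover have "inner g g = 1" using \<open>norm g = 1\<close> by (simp add: dot_square_norm)
  ultimately have "inner (z - y) (z - y) + 2 * inner (z - y) g + 1 \<le> R\<^sup>2"
    by (simp add: inner_add_left inner_add_right inner_commute)
  moreover have "inner (z - y) (z - y) \<ge> 0" by simp
  ultimately have "2 * inner (z - y) g \<le> - (1 - R\<^sup>2)" by linarith
  hence "(2 / (1 - R\<^sup>2)) * inner (z - y) g \<le> -1" using R2
    by (simp add: field_simps)
  then show ?thesis by simp
qed

lemma pos_hull_scale: 
  assumes "v \<in> pos_hull N" "c \<ge> 0" shows "c *\<^sub>R v \<in> pos_hull N"
proof -
  obtain c' u where "v = c' *\<^sub>R u" "c' \<ge> 0" "u \<in> N" using assms(1) by (auto simp: pos_hull_def)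
  then have "c *\<^sub>R v = (c * c') *\<^sub>R u" "c * c' \<ge> 0" using assms(2) by auto
  then show ?thesis using \<open>u \<in> N\<close> unfolding pos_hull_def by blast
qed

lemma pos_hull_inc: "v \<in> N \<Longrightarrow> v \<in> pos_hull N"
  unfolding pos_hull_def by (auto intro!: exI[of _ 1])

lemma Gset_conv:
  fixes K :: "'a::euclidean_space set"
  assumes KS: "K \<in> S_class" shows "convex (pos_hull (Gset K y))"
  unfolding convex_def
proof (intro ballI allI impI)
  fix a b and s t :: real
  assume a: "a \<in> pos_hull (Gset K y)" and b: "b \<in> pos_hull (Gset K y)" and st: "0 \<le> s" "0 \<le> t" "s + t = 1"
  obtain \<alpha> g where ag: "a = \<alpha> *\<^sub>R g" "\<alpha> \<ge> 0" "g \<in> Gset K y" using a by (auto simp: pos_hull_def)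
  obtain \<beta> h where bh: "b = \<beta> *\<^sub>R h" "\<beta> \<ge> 0" "h \<in> Gset K y" using b by (auto simp: pos_hull_def)
  define v where "v = s *\<^sub>R a + t *\<^sub>R b"
  show "s *\<^sub>R a + t *\<^sub>R b \<in> pos_hull (Gset K y)"
  proof (cases "v = 0")
    case True
    then show ?thesis using pos_hull_scale[OF pos_hull_inc[OF ag(3)], of 0] by (simp add: v_def)
  next
    case False
    define n where "n = norm v"
    have n0: "n > 0" using False by (simp add: n_def)
    define m where "m = (s * \<alpha> / n) *\<^sub>R g + (t * \<beta> / n) *\<^sub>R h"
    have mv: "m = (1 / n) *\<^sub>R v" by (simp add: m_def v_def ag bh algebra_simps divide_inverse)
    have nm: "norm m = 1" using n0 by (simp add: mv n_def)
    have "y - m \<in> conv_c {y - g, y - h}" unfolding m_def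
      by (rule arc) (use ag bh st n0 nm m_def in \<open>auto simp: Gset_def\<close>)
    also have "\<dots> \<subseteq> K" using spindle_sub[OF KS] ag bh by (auto simp: Gset_def)
    finally have "m \<in> Gset K y" using nm by (simp add: Gset_def)
    moreover have "v = n *\<^sub>R m" using n0 by (simp add: mv)
    ultimately show ?thesis using pos_hull_scale[OF pos_hull_inc, of m _ n] n0 by (simp add: v_def)
  qed
qed

lemma normal_in_G:
  fixes K :: "'a::euclidean_space set"
  assumes KS: "K \<in> S_class" and Kc: "compact K" and Kz: "K \<subseteq> cball z R" and R: "R < 1"
    and y: "y \<in> cdual K" and v: "v \<in> unit_normals (cdual K) y"
  shows "v \<in> Gset K y"
proof -
  define G where "G = Gset K y"
  define D where "D = (2 / (1 - R\<^sup>2)) *\<^sub>R (z - y)"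
  have DG: "\<forall>s\<in>G. inner D s \<le> -1" unfolding D_def G_def using Gset_neg[OF Kz R] by blast
  have nv: "norm v = 1" using v by (simp add: unit_normals_def)
  have vn: "\<forall>w\<in>cdual K. inner v (w - y) \<le> 0" using v by (simp add: unit_normals_def)
  have "v \<in> {c *\<^sub>R x | c x. c \<ge> 0 \<and> x \<in> convex hull G}"
  proof (rule ccontr)
    assume nin: "v \<notin> {c *\<^sub>R x | c x. c \<ge> 0 \<and> x \<in> convex hull G}"
    have "v \<noteq> 0" using nv by auto
    then obtain e \<epsilon> where e: "\<epsilon> > 0" "inner e v > 0" "\<forall>s\<in>G. inner e s \<le> -\<epsilon>"
      using farkas[OF Gset_compact[OF Kc] DG[unfolded G_def] _ nin[unfolded G_def]] unfolding G_def by blast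
    have "\<forall>k\<in>K. dist k y = 1 \<longrightarrow> inner e (y - k) \<le> -\<epsilon>"
    proof (intro ballI impI)
      fix k assume "k \<in> K" "dist k y = 1"
      hence "y - k \<in> G" by (simp add: G_def Gset_def dist_norm norm_minus_commute)
      thus "inner e (y - k) \<le> -\<epsilon>" using e(3) by blast
    qed
    then obtain t where t: "t > 0" "y + t *\<^sub>R e \<in> cdual K" using push[OF Kc y e(1)] by blast
    hence "inner v (t *\<^sub>R e) \<le> 0" using vn by force
    moreover have "inner v (t *\<^sub>R e) > 0" using t e(2) by (simp add: inner_commute)
    ultimately show False by simp
  qed
  then obtain c x where cx: "v = c *\<^sub>R x" "c \<ge> 0" "x \<in> convex hull G" by blast
  have "convex hull G \<subseteq> pos_hull G"
    by (rule hull_minimal) (use Gset_conv[OF KS] pos_hull_inc in \<open>auto simp: G_def\<close>)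
  hence "v \<in> pos_hull G" using cx pos_hull_scale by blast
  then obtain c' g where cg: "v = c' *\<^sub>R g" "c' \<ge> 0" "g \<in> G" by (auto simp: pos_hull_def)
  have "norm g = 1" using cg(3) by (simp add: G_def Gset_def)
  hence "c' = 1" using nv cg by simp
  thus ?thesis using cg by (simp add: G_def)
qed

lemma par:
  fixes g u D :: "'a::euclidean_space"
  assumes DG: "inner D g \<le> -1" "inner D u \<le> -1" and n: "norm g = 1" "norm u = 1"
    and s: "s > 0" and eq: "s *\<^sub>R g = t *\<^sub>R u"
  shows "g = u"
proof -
  have "inner D (s *\<^sub>R g) = s * inner D g" by simp
  also have "\<dots> \<le> s * (-1)" using s DG by (intro mult_left_mono) auto
  finally have 1: "inner D (t *\<^sub>R u) < 0" using eq s by simp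
  have t: "t > 0"
  proof (rule ccontr)
    assume "\<not> t > 0"
    hence "t * inner D u \<ge> 0" using DG by (intro mult_nonpos_nonpos) auto
    thus False using 1 by simp
  qed
  have "norm (s *\<^sub>R g) = norm (t *\<^sub>R u)" using eq by simp
  hence "s = t" using n s t by simp
  thus ?thesis using eq s by simp
qed

lemma seg_face:
  fixes K :: "'a::euclidean_space set"
  assumes KS: "K \<in> S_class" and Kc: "compact K" and Kz: "K \<subseteq> cball z R" and R: "R < 1"
    and y: "y \<in> cdual K" and x: "c_extremal K x" and uG: "y - x \<in> Gset K y"
    and a: "a \<in> pos_hull (unit_normals (cdual K) y)" and b: "b \<in> pos_hull (unit_normals (cdual K) y)"
    and wr: "w \<in> ray (y - x)" and ws: "w \<in> open_segment a b"
  shows "a \<in> ray (y - x)"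
proof -
  define u where "u = y - x"
  define G where "G = Gset K y"
  define D where "D = (2 / (1 - R\<^sup>2)) *\<^sub>R (z - y)"
  have DG: "\<And>s. s \<in> G \<Longrightarrow> inner D s \<le> -1" unfolding D_def G_def using Gset_neg[OF Kz R] by blast
  have nG: "\<And>s. s \<in> G \<Longrightarrow> norm s = 1" by (simp add: G_def Gset_def)
  have uG': "u \<in> G" using uG by (simp add: u_def G_def)
  have toG: "p \<in> pos_hull G" if pp: "p \<in> pos_hull (unit_normals (cdual K) y)" for p
  proof -
    obtain c v where "p = c *\<^sub>R v" "c \<ge> 0" "v \<in> unit_normals (cdual K) y" using pp unfolding pos_hull_def by blast
    moreover have "v \<in> G" using normal_in_G[OF KS Kc Kz R y] \<open>v \<in> _\<close> by (simp add: G_def)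
    ultimately show ?thesis unfolding pos_hull_def by blast
  qed
  obtain \<alpha> g where ag: "a = \<alpha> *\<^sub>R g" "\<alpha> \<ge> 0" "g \<in> G" using toG[OF a] by (auto simp: pos_hull_def)
  obtain \<beta> h where bh: "b = \<beta> *\<^sub>R h" "\<beta> \<ge> 0" "h \<in> G" using toG[OF b] by (auto simp: pos_hull_def)
  obtain \<theta> where th: "0 < \<theta>" "\<theta> < 1" "w = (1 - \<theta>) *\<^sub>R a + \<theta> *\<^sub>R b" using ws by (auto simp: in_segment)
  obtain \<mu> where mu: "w = \<mu> *\<^sub>R u" "\<mu> \<ge> 0" using wr by (auto simp: ray_def u_def)
  define A where "A = (1 - \<theta>) * \<alpha>"
  define B where "B = \<theta> * \<beta>"
  have B0: "B \<ge> 0" using th bh by (simp add: B_def)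
  have weq: "w = A *\<^sub>R g + B *\<^sub>R h" using th ag bh by (simp add: A_def B_def)
  show ?thesis
  proof (cases "\<alpha> = 0")
    case True
    then show ?thesis using ag by (auto simp: ray_def u_def intro!: exI[of _ 0])
  next
    case False
    hence A0: "A > 0" using ag th by (simp add: A_def)
    have mu0: "\<mu> > 0"
    proof (rule ccontr)
      assume "\<not> \<mu> > 0"
      hence "A *\<^sub>R g = (- B) *\<^sub>R h" using mu weq by (simp add: eq_neg_iff_add_eq_0)
      hence "g = h" using par[OF DG[OF ag(3)] DG[OF bh(3)] nG[OF ag(3)] nG[OF bh(3)] A0] by blast
      hence "(A + B) *\<^sub>R g = 0" using \<open>A *\<^sub>R g = (- B) *\<^sub>R h\<close> by (simp add: algebra_simps)
      thus False using A0 B0 nG[OF ag(3)] by auto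
    qed
    define c1 where "c1 = A / \<mu>"
    define c2 where "c2 = B / \<mu>"
    have c1: "c1 > 0" "c2 \<ge> 0" using A0 B0 mu0 by (simp_all add: c1_def c2_def)
    have ueq: "u = c1 *\<^sub>R g + c2 *\<^sub>R h"
    proof -
      have "\<mu> *\<^sub>R u = A *\<^sub>R g + B *\<^sub>R h" using mu weq by simp
      hence "(1/\<mu>) *\<^sub>R (\<mu> *\<^sub>R u) = (1/\<mu>) *\<^sub>R (A *\<^sub>R g + B *\<^sub>R h)" by simp
      thus ?thesis using mu0 by (simp add: c1_def c2_def scaleR_add_right divide_inverse mult.commute)
    qed
    show ?thesis
    proof (cases "g = u")
      case True
      then show ?thesis using ag by (auto simp: ray_def u_def)
    next
      case False
      have hu: "h \<noteq> u"
      proof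
        assume "h = u"
        hence "c1 *\<^sub>R g = (1 - c2) *\<^sub>R u" using ueq by (simp add: algebra_simps)
        hence "g = u" using par[OF DG[OF ag(3)] DG[OF uG'] nG[OF ag(3)] nG[OF uG'] c1(1)] by blast
        thus False using False by simp
      qed
      have "y - (c1 *\<^sub>R g + c2 *\<^sub>R h) \<in> conv_c {y - g, y - h}"
        by (rule arc) (use nG[OF ag(3)] nG[OF bh(3)] c1 nG[OF uG'] ueq in auto)
      moreover have "y - (c1 *\<^sub>R g + c2 *\<^sub>R h) = x" using ueq[symmetric] unfolding u_def by simp
      ultimately have "x \<in> conv_c {y - g, y - h}" by simp
      moreover have "y - g \<in> K" "y - h \<in> K" using ag(3) bh(3) by (auto simp: G_def Gset_def)
      ultimately have "y - g = x \<or> y - h = x" using x unfolding c_extremal_def by blast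
      hence "g = u \<or> h = u" by (auto simp: u_def)
      then show ?thesis using False hu by blast
    qed
  qed
qed

lemma hull2:
  fixes a b :: "'a::euclidean_space"
  assumes x: "x' \<in> convex hull S" and S: "S \<subseteq> {a, b}"
  shows "\<exists>a' b' \<theta>. a' \<in> S \<and> b' \<in> S \<and> 0 \<le> \<theta> \<and> \<theta> \<le> 1 \<and> x' = (1 - \<theta>) *\<^sub>R a' + \<theta> *\<^sub>R b'"
proof -
  have "S = {} \<or> S = {a} \<or> S = {b} \<or> S = {a, b}" using S by blast
  moreover
  { assume "S = {}" hence ?thesis using x by simp }
  moreover
  { fix c assume "S = {c}"
    hence ?thesis using x by (auto intro!: exI[of _ 0]) }
  moreover
  { assume Sab: "S = {a, b}"
    hence "x' \<in> closed_segment a b" using x by (simp add: segment_convex_hull)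
    then obtain \<theta> where "0 \<le> \<theta>" "\<theta> \<le> 1" "x' = (1 - \<theta>) *\<^sub>R a + \<theta> *\<^sub>R b" by (auto simp: in_segment)
    hence ?thesis using Sab by blast }
  ultimately show ?thesis by blast
qed

lemma ext_dir:
  fixes K :: "'a::euclidean_space set"
  assumes KS: "K \<in> S_class" and Kc: "compact K" and Kz: "K \<subseteq> cball z R" and R: "R < 1"
    and y: "y \<in> cdual K" and u: "u \<in> unit_normals (cdual K) y"
    and ex: "extremal_ray u (pos_hull (unit_normals (cdual K) y))"
  shows "c_extremal K (y - u)"
proof -
  define x where "x = y - u"
  define G where "G = Gset K y"
  define D where "D = (2 / (1 - R\<^sup>2)) *\<^sub>R (z - y)"
  define C where "C = pos_hull (unit_normals (cdual K) y)"
  have DG: "\<And>s. s \<in> G \<Longrightarrow> inner D s \<le> -1" unfolding D_def G_def using Gset_neg[OF Kz R] by blast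
  have nG: "\<And>s. s \<in> G \<Longrightarrow> norm s = 1" by (simp add: G_def Gset_def)
  have uG: "u \<in> G" using normal_in_G[OF KS Kc Kz R y u] by (simp add: G_def)
  have xK: "x \<in> K" using uG by (simp add: G_def Gset_def x_def)
  have face: "ray u face_of C" using ex by (simp add: extremal_ray_def C_def)
  have GC: "\<And>s. s \<in> G \<Longrightarrow> s \<in> C" unfolding C_def G_def using Gset_normal pos_hull_inc by blast
  have rayG: "g = u" if gs: "g \<in> G" "s > 0" "s *\<^sub>R g \<in> ray u" for g s
  proof -
    obtain c where "s *\<^sub>R g = c *\<^sub>R u" using gs(3) by (auto simp: ray_def)
    thus ?thesis using par[OF DG[OF gs(1)] DG[OF uG] nG[OF gs(1)] nG[OF uG] gs(2)] by blast
  qed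
  have rayG1: "g = u" if gs: "g \<in> G" "s > 0" "s *\<^sub>R g = u" for g s
  proof -
    have "s *\<^sub>R g = 1 *\<^sub>R u" using gs(3) by simp
    thus ?thesis using par[OF DG[OF gs(1)] DG[OF uG] nG[OF gs(1)] nG[OF uG] gs(2)] by blast
  qed
  have "\<forall>p q. p \<in> K \<longrightarrow> q \<in> K \<longrightarrow> x \<in> conv_c {p, q} \<longrightarrow> p = x \<or> q = x"
  proof (intro allI impI)
    fix p q assume pK: "p \<in> K" and qK: "q \<in> K" and xpq: "x \<in> conv_c {p, q}"
    show "p = x \<or> q = x"
    proof (rule ccontr)
      assume npq: "\<not> (p = x \<or> q = x)"
      define S where "S = {s \<in> {y - p, y - q}. norm s = 1}"
      have SG: "S \<subseteq> G" using pK qK by (auto simp: S_def G_def Gset_def)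
      have Sc: "compact S" by (rule finite_imp_compact) (simp add: S_def)
      have nin: "u \<notin> {c *\<^sub>R x' | c x'. c \<ge> 0 \<and> x' \<in> convex hull S}"
      proof
        assume "u \<in> {c *\<^sub>R x' | c x'. c \<ge> 0 \<and> x' \<in> convex hull S}"
        then obtain c x' where cx: "u = c *\<^sub>R x'" "c \<ge> 0" "x' \<in> convex hull S" by blast
        obtain a' b' \<theta> where ab: "a' \<in> S" "b' \<in> S" "0 \<le> \<theta>" "\<theta> \<le> 1" "x' = (1 - \<theta>) *\<^sub>R a' + \<theta> *\<^sub>R b'"
          using hull2[OF cx(3), of "y - p" "y - q"] by (auto simp: S_def)
        define c1 where "c1 = c * (1 - \<theta>)"
        define c2 where "c2 = c * \<theta>"
        have c12: "c1 \<ge> 0" "c2 \<ge> 0" using cx ab by (simp_all add: c1_def c2_def)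
        have ueq: "u = c1 *\<^sub>R a' + c2 *\<^sub>R b'" using cx ab by (simp add: c1_def c2_def scaleR_add_right)
        have aG: "a' \<in> G" "b' \<in> G" using ab SG by auto
        have u0: "u \<noteq> 0" using nG[OF uG] by auto
        have uray: "1 *\<^sub>R u \<in> ray u" "u \<in> ray u" by (auto simp: ray_def intro!: exI[of _ 1])
        have "a' = u \<or> b' = u"
        proof (cases "c1 = 0")
          case True
          hence "c2 *\<^sub>R b' = u" using ueq by simp
          moreover have "c2 > 0"
          proof (rule ccontr)
            assume "\<not> c2 > 0"
            hence "c2 = 0" using c12 by simp
            thus False using \<open>c2 *\<^sub>R b' = u\<close> u0 by simp
          qed
          ultimately show ?thesis using rayG1[OF aG(2)] by blast
        next
          case c1n: False
          show ?thesis
          proof (cases "c2 = 0")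
            case True
            hence "c1 *\<^sub>R a' = u" using ueq by simp
            moreover have "c1 > 0" using c1n c12 by simp
            ultimately show ?thesis using rayG1[OF aG(1)] by blast
          next
            case c2n: False
            show ?thesis
            proof (cases "(2 * c1) *\<^sub>R a' = (2 * c2) *\<^sub>R b'")
              case True
              have "2 *\<^sub>R (c1 *\<^sub>R a') = 2 *\<^sub>R (c2 *\<^sub>R b')" using True by (simp only: scaleR_scaleR)
              hence ee: "c1 *\<^sub>R a' = c2 *\<^sub>R b'" by (rule scaleR_left_imp_eq[rotated]) simp
              have "(2 * c1) *\<^sub>R a' = c1 *\<^sub>R a' + c1 *\<^sub>R a'" by (simp only: mult_2 scaleR_left_distrib)
              also have "\<dots> = c1 *\<^sub>R a' + c2 *\<^sub>R b'" by (simp only: ee)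
              also have "\<dots> = u" by (simp only: ueq)
              finally have "(2 * c1) *\<^sub>R a' = u" .
              moreover have "2 * c1 > 0" using c1n c12 by simp
              ultimately show ?thesis using rayG1[OF aG(1)] by blast
            next
              case False
              have "u = midpoint ((2 * c1) *\<^sub>R a') ((2 * c2) *\<^sub>R b')"
                using ueq by (simp add: midpoint_def algebra_simps)
              hence "u \<in> open_segment ((2 * c1) *\<^sub>R a') ((2 * c2) *\<^sub>R b')" using False by simp
              moreover have "(2 * c1) *\<^sub>R a' \<in> C" "(2 * c2) *\<^sub>R b' \<in> C"
                using GC[OF aG(1)] GC[OF aG(2)] c12 unfolding C_def by (auto intro!: pos_hull_scale)
              ultimately have "(2 * c1) *\<^sub>R a' \<in> ray u" using face_ofD[OF face] uray by blast
              then show ?thesis using rayG[OF aG(1), of "2 * c1"] c1n c12 by auto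
            qed
          qed
        qed
        hence "a' = u \<or> b' = u" .
        moreover have "a' = y - p \<or> a' = y - q" "b' = y - p \<or> b' = y - q" using ab by (auto simp: S_def)
        ultimately have "p = x \<or> q = x" by (auto simp: x_def)
        thus False using npq by simp
      qed
      have DS: "\<forall>s\<in>S. inner D s \<le> -1" using SG DG by blast
      obtain e \<epsilon> where e: "\<epsilon> > 0" "inner e u > 0" "\<forall>s\<in>S. inner e s \<le> -\<epsilon>"
      proof -
        have "u \<noteq> 0" using nG[OF uG] by auto
        then show ?thesis using farkas[OF Sc DS _ nin] that by blast
      qed
      have ypq: "y \<in> cdual {p, q}" using y pK qK by (auto simp: mem_cdual)
      have act: "\<forall>k\<in>{p, q}. dist k y = 1 \<longrightarrow> inner e (y - k) \<le> -\<epsilon>"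
      proof (intro ballI impI)
        fix k assume "k \<in> {p, q}" "dist k y = 1"
        hence "y - k \<in> S" by (auto simp: S_def dist_norm norm_minus_commute)
        thus "inner e (y - k) \<le> -\<epsilon>" using e(3) by blast
      qed
      obtain t where t: "t > 0" "y + t *\<^sub>R e \<in> cdual {p, q}"
        using push[OF _ ypq e(1) act] by auto
      have "dist (y + t *\<^sub>R e) x \<le> 1" using xpq t(2) by (auto simp: conv_c_def mem_cdual)
      hence "inner (u + t *\<^sub>R e) (u + t *\<^sub>R e) \<le> 1"
        by (simp add: dist_le1_iff x_def algebra_simps)
      moreover have "inner (u + t *\<^sub>R e) (u + t *\<^sub>R e) = inner u u + 2 * t * inner e u + t * t * inner e e"
        by (simp add: inner_add_left inner_add_right inner_commute algebra_simps)
      moreover have "inner u u = 1" using nG[OF uG] by (simp add: dot_square_norm)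
      moreover have "t * t * inner e e \<ge> 0" by simp
      moreover have "2 * t * inner e u > 0" using t e by simp
      ultimately show False by linarith
    qed
  qed
  then show ?thesis using xK by (simp add: c_extremal_def x_def)
qed

lemma far_point:
  fixes L :: "'a::euclidean_space set"
  assumes Lc: "compact L" and Ln: "L \<noteq> {}" and x: "c_extremal (cdual L) x"
  shows "\<exists>y\<in>L. dist x y = 1"
proof (rule ccontr)
  assume nf: "\<not> (\<exists>y\<in>L. dist x y = 1)"
  have xK: "x \<in> cdual L" using x by (simp add: c_extremal_def)
  hence le1: "\<forall>w\<in>L. dist w x \<le> 1" by (simp add: mem_cdual)
  have lt1: "\<forall>w\<in>L. dist w x < 1" using le1 nf by (metis dist_commute order_le_less)
  have "continuous_on L (\<lambda>w. dist w x)" by (intro continuous_intros)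
  then obtain w1 where w1: "w1 \<in> L" "\<forall>w\<in>L. dist w x \<le> dist w1 x"
    using continuous_attains_sup[OF Lc Ln] by blast
  define r where "r = 1 - dist w1 x"
  have r0: "r > 0" using lt1 w1 by (simp add: r_def)
  obtain b :: 'a where b: "b \<in> Basis" using nonempty_Basis by blast
  have nb: "norm b = 1" using b by simp
  define p where "p = x + r *\<^sub>R b"
  define q where "q = x - r *\<^sub>R b"
  have dp: "dist x p = r" "dist x q = r" using nb r0 by (simp_all add: p_def q_def dist_norm)
  have pK: "p \<in> cdual L" "q \<in> cdual L" unfolding mem_cdual
  proof (safe)
    fix w assume "w \<in> L"
    hence "dist w x \<le> dist w1 x" using w1 by blast
    thus "dist w p \<le> 1" "dist w q \<le> 1"
      using dist_triangle[of w p x] dist_triangle[of w q x] dp by (simp_all add: r_def)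
  qed
  have "x \<in> conv_c {p, q}" unfolding conv_c_def mem_cdual
  proof
    fix w assume "w \<in> cdual {p, q}"
    hence "dist w p \<le> 1" "dist w q \<le> 1" by (auto simp: mem_cdual dist_commute)
    have "(w - p) + (w - q) = 2 *\<^sub>R (w - x)" by (simp add: p_def q_def scaleR_2 algebra_simps)
    hence "2 * norm (w - x) \<le> norm (w - p) + norm (w - q)"
      using norm_triangle_ineq[of "w - p" "w - q"] by simp
    hence "norm (w - x) \<le> (1/2) * (norm (w - p) + norm (w - q))" by simp
    thus "dist w x \<le> 1" using \<open>dist w p \<le> 1\<close> \<open>dist w q \<le> 1\<close> by (simp add: dist_norm)
  qed
  hence "p = x \<or> q = x" using x pK by (simp add: c_extremal_def)
  thus False using dp r0 by auto
qed

lemma y_frontier: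
  fixes L :: "'a::euclidean_space set"
  assumes x: "x \<in> cdual L" and y: "y \<in> L" and d: "dist x y = 1"
  shows "y \<in> frontier L"
  unfolding frontier_def
proof
  show "y \<in> closure L" using y closure_subset by blast
  show "y \<notin> interior L"
  proof
    assume "y \<in> interior L"
    then obtain \<epsilon> where e: "\<epsilon> > 0" "ball y \<epsilon> \<subseteq> L" by (auto simp: mem_interior)
    define w where "w = y + (\<epsilon>/2) *\<^sub>R (y - x)"
    have n1: "norm (y - x) = 1" using d by (simp add: dist_norm norm_minus_commute)
    have "dist y w = \<epsilon>/2" using e n1 by (simp add: w_def dist_norm)
    hence "w \<in> L" using e by auto
    hence "dist w x \<le> 1" using x by (simp add: mem_cdual)
    moreover have "w - x = (1 + \<epsilon>/2) *\<^sub>R (y - x)" by (simp add: w_def algebra_simps)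
    hence "dist w x = 1 + \<epsilon>/2" using e n1 by (simp add: dist_norm)
    ultimately show False using e by simp
  qed
qed

theorem proposition4p9:
  fixes K :: "'a::euclidean_space set"
  assumes "DIM('a) \<ge> 2"
    and "K \<in> S_class"
    and "Outrad K < 1"
  shows "ext_c K = {y - u | y u. y \<in> frontier (cdual K) \<and> u \<in> unit_normals (cdual K) y
                       \<and> extremal_ray u (pos_hull (unit_normals (cdual K) y))}"
proof (cases "K = {}")
  case True
  have "cdual K = UNIV" using True by (simp add: cdual_def)
  then show ?thesis using True by (simp add: ext_c_def c_extremal_def)
next
  case Kne: False
  have KS: "K \<in> S_class" using assms(2) .
  obtain R z where R: "R < 1" and Kz: "K \<subseteq> cball z R"
  proof -
    have "Inf {ereal R | R. \<exists>z. K \<subseteq> cball z R} < 1" using assms(3) by (simp add: Outrad_def)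
    then obtain r where "r \<in> {ereal R | R. \<exists>z. K \<subseteq> cball z R}" "r < 1" by (auto simp: Inf_less_iff)
    then obtain R z where "ereal R < 1" "K \<subseteq> cball z R" by auto
    then show ?thesis using that by auto
  qed
  define L where "L = cdual K"
  have KL: "cdual L = K" using S_class_dd[OF KS] by (simp add: L_def)
  have Kc: "compact K"
    using closed_cdual[of L] KL bounded_subset[OF bounded_cball Kz] by (simp add: compact_eq_bounded_closed)
  obtain k0 where k0: "k0 \<in> K" using Kne by blast
  have "L \<subseteq> cball k0 1" using k0 by (auto simp: L_def mem_cdual)
  hence Lc: "compact L"
    using closed_cdual[of K] bounded_subset[OF bounded_cball] by (simp add: L_def compact_eq_bounded_closed)
  have "z \<in> L" unfolding L_def mem_cdual
  proof
    fix k assume "k \<in> K"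
    hence "dist z k \<le> R" using Kz by auto
    thus "dist k z \<le> 1" using R by (simp add: dist_commute)
  qed
  hence Lne: "L \<noteq> {}" by blast
  show ?thesis
  proof (rule set_eqI, rule iffI)
    fix x assume "x \<in> ext_c K"
    hence cx: "c_extremal K x" by (simp add: ext_c_def)
    hence xK: "x \<in> K" by (simp add: c_extremal_def)
    obtain y where y: "y \<in> L" "dist x y = 1" using far_point[OF Lc Lne] cx KL by auto
    define u where "u = y - x"
    have uG: "u \<in> Gset K y" using y xK by (simp add: u_def Gset_def dist_norm norm_minus_commute)
    have un: "u \<in> unit_normals L y" using Gset_normal[OF uG] by (simp add: L_def)
    have yf: "y \<in> frontier L" using y_frontier[of x L y] xK KL y by simp
    have yK: "y \<in> cdual K" using y by (simp add: L_def)
    have "ray u face_of pos_hull (unit_normals L y)"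
      unfolding face_of_def
    proof (intro conjI ballI impI)
      show "ray u \<subseteq> pos_hull (unit_normals L y)" using un by (auto simp: ray_def pos_hull_def)
      show "convex (ray u)" unfolding convex_def ray_def
      proof (safe)
        fix s t c1 c2 :: real assume "0 \<le> s" "0 \<le> t" "s + t = 1" "0 \<le> c1" "0 \<le> c2"
        then show "\<exists>c. s *\<^sub>R c1 *\<^sub>R u + t *\<^sub>R c2 *\<^sub>R u = c *\<^sub>R u \<and> 0 \<le> c"
          by (intro exI[of _ "s * c1 + t * c2"]) (simp add: algebra_simps)
      qed
      fix a b w assume a: "a \<in> pos_hull (unit_normals L y)" and b: "b \<in> pos_hull (unit_normals L y)"
        and w: "w \<in> ray u" and ws: "w \<in> open_segment a b"
      show "a \<in> ray u" using seg_face[OF KS Kc Kz R yK cx _ _ _ _ ws] uG a b w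
        by (simp add: u_def L_def)
      have ws': "w \<in> open_segment b a" using ws by (simp add: open_segment_commute)
      show "b \<in> ray u" using seg_face[OF KS Kc Kz R yK cx _ _ _ _ ws'] uG a b w
        by (simp add: u_def L_def)
    qed
    moreover have "u \<noteq> 0" using uG by (auto simp: Gset_def)
    ultimately have "extremal_ray u (pos_hull (unit_normals L y))" by (simp add: extremal_ray_def)
    moreover have "x = y - u" by (simp add: u_def)
    ultimately show "x \<in> {y - u | y u. y \<in> frontier (cdual K) \<and> u \<in> unit_normals (cdual K) y
                       \<and> extremal_ray u (pos_hull (unit_normals (cdual K) y))}"
      using yf un unfolding L_def by blast
  next
    fix x assume "x \<in> {y - u | y u. y \<in> frontier (cdual K) \<and> u \<in> unit_normals (cdual K) y
                       \<and> extremal_ray u (pos_hull (unit_normals (cdual K) y))}"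
    then obtain y u where x: "x = y - u" and yf: "y \<in> frontier (cdual K)"
      and un: "u \<in> unit_normals (cdual K) y" and ex: "extremal_ray u (pos_hull (unit_normals (cdual K) y))"
      by blast
    have "y \<in> closure (cdual K)" using yf by (simp add: frontier_def)
    hence yK: "y \<in> cdual K" using closed_cdual[of K] by (simp add: closure_closed)
    show "x \<in> ext_c K" using ext_dir[OF KS Kc Kz R yK un ex] x by (simp add: ext_c_def)
  qed
qed

end
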